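(* Let $0<v_T<\tfrac12$ and $V_u>0$, and set $g_{\max}=F'(v_i)$ and $$g_\ast=\frac{F'(v_i)\,v_i-F(v_i)}{V_u}.$$ Then $g_\ast>0$, and for every $g$ with $g_\ast\le g<g_{\max}$ and every $k\ge 0$, the central cell fires when $v_u$ is raised from $0$ to $V_u$ if and only if $$k<\frac{F'(v_i)}{g}-1.$$
   Context: Fix $v_T\in(0,\tfrac12)$ and let $F(v)=v(v-v_T)(1-v)$, with local minimum at $v_{\min}$, local maximum at $v_{\max}$, inflection point $v_i=(1+v_T)/3$; $0<v_{\min}<v_T<v_i<v_{\max}<1$. Central-cell model: for $g>0$, real $k\ge0$ and upstream voltage $v_u$, $\frac{dv}{dt}=F(v)+g(v_u-v)-gkv$; equilibria solve $F(v)=g(k+1)v-gv_u$. Firing: given $V_u>0$, the central cell fires when $v_u$ is raised from $0$ to $V_u$ if there exist $v_{u,c}\in(0,V_u)$ and $v^*\in(v_{\min},v_i)$ with $F(v^* )=g(k+1)v^*-gv_{u,c}$ and $F'(v^* )=g(k+1)$ (a saddle-node collision of the rest and threshold equilibria). *)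

theory Defs
  imports "HOL-Analysis.Analysis"
begin

definition F :: "real \<Rightarrow> real \<Rightarrow> real" where
  "F vT v = v * (v - vT) * (1 - v)"

definition v_i :: "real \<Rightarrow> real" where
  "v_i vT = (1 + vT) / 3"

text \<open>Local minimum of F: the smaller of the two critical points of F,
  i.e. the smaller root of F'(v) = -3 v^2 + 2 (1 + vT) v - vT.\<close>
definition v_min :: "real \<Rightarrow> real" where
  "v_min vT = ((1 + vT) - sqrt ((1 + vT)^2 - 3 * vT)) / 3"

text \<open>Firing criterion: saddle-node collision of rest and threshold equilibria
  for some upstream voltage v_{u,c} in (0, V_u), at some v* in (v_min, v_i).\<close>
definition fires :: "real \<Rightarrow> real \<Rightarrow> real \<Rightarrow> real \<Rightarrow> bool" where
  "fires vT g k Vu \<longleftrightarrow>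
     (\<exists>vuc vs. 0 < vuc \<and> vuc < Vu \<and> v_min vT < vs \<and> vs < v_i vT \<and>
        F vT vs = g * (k + 1) * vs - g * vuc \<and>
        deriv (F vT) vs = g * (k + 1))"

end

theory Submission
  imports Defs
begin

lemma derivF: "deriv (F vT) x = -3*x^2 + 2*(1+vT)*x - vT"
proof -
  have "(F vT has_real_derivative (-3*x^2 + 2*(1+vT)*x - vT)) (at x)"
  proof -
    have e: "F vT = (\<lambda>x. (1 + vT) * (x * x) - x * x * x - vT * x)"
      by (rule ext) (simp add: F_def algebra_simps power2_eq_square power3_eq_cube)
    show ?thesis unfolding e
      by (auto intro!: derivative_eq_intros simp: algebra_simps power2_eq_square)
  qed
  thus ?thesis by (rule DERIV_imp_deriv)
qed

theorem mainTheorem2: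
  fixes vT Vu :: real
  assumes "0 < vT" and "vT < 1/2" and "0 < Vu"
  defines "gmax \<equiv> deriv (F vT) (v_i vT)"
      and "gstar \<equiv> (deriv (F vT) (v_i vT) * v_i vT - F vT (v_i vT)) / Vu"
  shows "0 < gstar \<and>
         (\<forall>g k. gstar \<le> g \<longrightarrow> g < gmax \<longrightarrow> 0 \<le> k \<longrightarrow>
            (fires vT g k Vu \<longleftrightarrow> k < deriv (F vT) (v_i vT) / g - 1))"
proof -
  define a where "a = 1 + vT"
  have h: "\<And>x. deriv (F vT) x * x - F vT x = x^2 * (a - 2*x)"
    by (simp add: derivF F_def a_def algebra_simps power2_eq_square power3_eq_cube)
  have gm: "gmax = (a^2 - 3* vT)/3"
    by (simp add: gmax_def derivF v_i_def a_def power2_eq_square field_simps)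
  have D: "\<And>x. deriv (F vT) x = gmax - 3*(x - a/3)^2"
    by (simp add: gm derivF a_def power2_eq_square field_simps)
  have vi: "v_i vT = a/3" by (simp add: v_i_def a_def)
  have vm: "v_min vT = (a - sqrt (a^2 - 3* vT))/3" by (simp add: v_min_def a_def)
  have apos: "a > 0" using assms by (simp add: a_def)
  have disc: "a^2 - 3 * vT > 0"
  proof -
    have "vT* vT \<ge> 0" by simp
    moreover have "a^2 - 3 * vT = 1 - vT + vT* vT" by (simp add: a_def power2_eq_square algebra_simps)
    ultimately show ?thesis using assms by linarith
  qed
  have hvi: "gstar * Vu = (a/3)^2 * (a/3)"
    using h[of "a/3"] assms by (simp add: gstar_def vi field_simps)
  have gs: "0 < gstar"
  proof -
    have "(a/3)^2 * (a/3) > 0" using apos by simp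
    moreover have "gstar = (a/3)^2 * (a/3) / Vu" using hvi assms(3) by (simp add: field_simps)
    ultimately show ?thesis using assms(3) by simp
  qed
  have sq: "sqrt (a^2 - 3 * vT) < a"
  proof -
    have "a^2 - 3 * vT < a^2" using assms by simp
    hence "sqrt (a^2 - 3 * vT) < sqrt (a^2)" by (rule real_sqrt_less_mono)
    thus ?thesis using apos by simp
  qed
  show ?thesis
  proof (intro conjI gs allI impI)
    fix g k :: real
    assume g1: "gstar \<le> g" and g2: "g < gmax" and k0: "0 \<le> k"
    have gp: "g > 0" using gs g1 by simp
    have "deriv (F vT) (v_i vT) = gmax" by (simp add: gmax_def)
    show "fires vT g k Vu \<longleftrightarrow> k < deriv (F vT) (v_i vT) / g - 1"
    proof
      assume "fires vT g k Vu"
      then obtain vuc vs where vs: "vs < v_i vT" and e: "deriv (F vT) vs = g*(k+1)"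
        unfolding fires_def by blast
      have "(vs - a/3)^2 > 0" using vs vi by simp
      moreover have "gmax - 3*(vs - a/3)^2 = g*(k+1)" using e D[of vs] by simp
      ultimately have "g*(k+1) < gmax" by linarith
      hence "k + 1 < gmax / g" using gp by (simp add: field_simps)
      thus "k < deriv (F vT) (v_i vT) / g - 1" by (simp add: gmax_def)
    next
      assume "k < deriv (F vT) (v_i vT) / g - 1"
      hence "k + 1 < gmax / g" by (simp add: gmax_def)
      hence G1: "g*(k+1) < gmax" using gp by (simp add: field_simps)
      have G0: "g*(k+1) > 0" using gp k0 by simp
      define G where "G = g*(k+1)"
      define s where "s = sqrt (a^2 - 3* vT - 3*G)"
      define vs where "vs = (a - s)/3"
      have s0: "s > 0" unfolding s_def using G1 gm G_def by simp
      have s1: "s < sqrt (a^2 - 3* vT)" unfolding s_def using G0 G_def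
        by (simp add: real_sqrt_less_iff)
      have ss: "s^2 = a^2 - 3* vT - 3*G" unfolding s_def using G1 gm G_def by simp
      have vsmin: "v_min vT < vs" using s1 by (simp add: vm vs_def)
      have vsi: "vs < v_i vT" using s0 by (simp add: vi vs_def)
      have vsp: "vs > 0" using s1 sq by (simp add: vs_def)
      have dv: "deriv (F vT) vs = G"
      proof -
        have "(vs - a/3)^2 = s^2/9" by (simp add: vs_def power2_eq_square field_simps)
        thus ?thesis using D[of vs] ss gm by (simp add: field_simps)
      qed
      define vuc where "vuc = vs^2 * (a - 2* vs) / g"
      have eq: "F vT vs = g*(k+1)* vs - g* vuc"
      proof -
        have "g * vuc = vs^2 * (a - 2* vs)" using gp by (simp add: vuc_def)
        also have "\<dots> = G * vs - F vT vs" using h[of vs] dv by simp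
        finally show ?thesis by (simp add: G_def)
      qed
      have vuc0: "vuc > 0" using vsp vsi vi gp apos by (simp add: vuc_def)
      have mono: "vs^2 * (a - 2* vs) < (a/3)^2*(a/3)"
      proof -
        have "(a/3)^2*(a/3) - vs^2*(a - 2* vs) = (a/3 - vs)^2 * (a/3 + 2* vs)"
          by (simp add: power2_eq_square field_simps)
        moreover have "(a/3 - vs)^2 * (a/3 + 2* vs) > 0" using vsi vi vsp apos by simp
        ultimately show ?thesis by linarith
      qed
      have "vs^2 * (a - 2* vs) < g * Vu"
        using mono hvi g1 assms(3) by (smt (verit) mult_right_mono)
      hence vuc1: "vuc < Vu" using gp by (simp add: vuc_def field_simps)
      show "fires vT g k Vu" unfolding fires_def
        using vuc0 vuc1 vsmin vsi eq dv G_def by blast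
    qed
  qed
qed

end
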